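(* Let $N\ge 1$ and $d$ be integers and let $d_1,\dots,d_N,\rho_1,\dots,\rho_N$ be integers with $$0\le d_1<\rho_N\le d_2<\rho_{N-1}\le d_3<\dots\le d_N<\rho_1\le d .$$ Put $m=d-\sum_{l=1}^N\rho_l+\sum_{l=1}^N d_l$ and assume $m>0$. Let $$\mathcal L=\{d_1+1,\dots,\rho_N-1\}\cup\{d_2+1,\dots,\rho_{N-1}-1\}\cup\dots\cup\{d_N+1,\dots,\rho_1-1\}$$ (so $|\mathcal L|=d-m-N=:K$). Then there exist unique complex constants $C_1,\dots,C_K$ such that the polynomial $$P(x)=(x+1)^{m+N}+C_1(x+1)^{m+N+1}+\dots+C_K(x+1)^{d}$$ has zero coefficient of $x^l$ for every $l\in\mathcal L$; equivalently, the $K\times K$ linear system $\binom{m+N}{l_i}+\sum_{j=1}^{K}C_j\binom{m+N+j}{l_i}=0$, $1\le i\le K$ (where $l_1,\dots,l_K$ are the elements of $\mathcal L$), has nonzero determinant. *)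

theory Defs
  imports Complex_Main "HOL-Computational_Algebra.Polynomial"
begin

definition shifted_binom_poly :: "nat \<Rightarrow> nat \<Rightarrow> (nat \<Rightarrow> complex) \<Rightarrow> complex poly" where
  "shifted_binom_poly e K C =
     [:1, 1:] ^ e + (\<Sum>j=1..K. smult (C j) ([:1, 1:] ^ (e + j)))"

end

theory Submission
  imports Defs
begin

lemma dvd_pderiv_pow:
  fixes p q :: "complex poly"
  assumes "q ^ Suc k dvd p" shows "q ^ k dvd pderiv p"
proof -
  obtain r where r: "p = q ^ Suc k * r" using assms by (auto elim: dvdE)
  have "pderiv p = q ^ k * (smult (of_nat (Suc k)) (pderiv q) * r + q * pderiv r)"
    unfolding r pderiv_mult pderiv_power_Suc by (simp add: algebra_simps)
  thus ?thesis by simp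
qed

lemma sparse_zero:
  fixes p :: "complex poly"
  assumes "finite T" "\<forall>n. n \<notin> T \<longrightarrow> coeff p n = 0" "card T \<le> k" "[:1,1:]^k dvd p"
  shows "p = 0"
  using assms
proof (induction k arbitrary: p T)
  case 0
  then have "T = {}" by auto
  with 0 show ?case by (auto intro: poly_eqI)
next
  case (Suc k)
  show ?case
  proof (rule ccontr)
    assume "p \<noteq> 0"
    then obtain a where a: "coeff p a \<noteq> 0" by (meson leading_coeff_neq_0)
    with Suc.prems have aT: "a \<in> T" by auto
    define q where "q = pCons 0 (pderiv p) - smult (of_nat a) p"
    have cq: "coeff q n = (of_nat n - of_nat a) * coeff p n" for n
      by (cases n) (auto simp: q_def coeff_pderiv algebra_simps)
    have "[:1,1:]^k dvd q"
    proof -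
      have "[:1,1:]^k dvd pderiv p" using Suc.prems(4) by (rule dvd_pderiv_pow)
      moreover have "pCons 0 (pderiv p) = [:0,1:] * pderiv p" by simp
      ultimately have "[:1,1:]^k dvd pCons 0 (pderiv p)" by (metis dvd_mult)
      moreover have "[:1,1:]^k dvd smult (of_nat a) p"
        using Suc.prems(4) by (meson dvd_trans dvd_smult le_imp_power_dvd le_SucI order_refl)
      ultimately show ?thesis unfolding q_def by (rule dvd_diff)
    qed
    moreover have "\<forall>n. n \<notin> T - {a} \<longrightarrow> coeff q n = 0" using Suc.prems(2) cq by auto
    moreover have "card (T - {a}) \<le> k" using Suc.prems(1,3) aT by auto
    ultimately have "q = 0" using Suc.IH[of "T - {a}" q] Suc.prems(1) by auto
    hence "coeff p n = 0" if "n \<noteq> a" for n using cq[of n] that by auto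
    hence pm: "p = monom (coeff p a) a" by (intro poly_eqI) (auto simp: coeff_monom)
    have "[:1,1:] dvd p" using Suc.prems(4) by (meson dvd_power dvd_trans zero_less_Suc)
    hence "poly p (-1) = 0" using poly_eq_0_iff_dvd[of p "-1"] by simp
    moreover have "poly p (-1) \<noteq> 0" using a by (subst pm) (simp add: poly_monom)
    ultimately show False by simp
  qed
qed

lemma pcompose_power: "pcompose (p ^ n) q = (pcompose p q) ^ n"
  for p q :: "complex poly"
  by (induct n) (simp_all add: pcompose_1 pcompose_mult)

lemma indep:
  fixes c :: "nat \<Rightarrow> complex"
  assumes "finite J" "(\<Sum>j\<in>J. smult (c j) ([:1,1:]^(e+j))) = 0" "j0 \<in> J"
  shows "c j0 = 0"
proof -
  have h: "pcompose [:1,1:] [:-1,1:] = monom (1::complex) 1"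
    by (simp add: pcompose_pCons monom_Suc)
  have "pcompose (\<Sum>j\<in>J. smult (c j) ([:1,1:]^(e+j))) [:-1,1:] = (\<Sum>j\<in>J. monom (c j) (e+j))"
    by (simp add: pcompose_sum pcompose_smult pcompose_power h smult_monom monom_power)
  hence "(\<Sum>j\<in>J. monom (c j) (e+j)) = 0" using assms(2) by simp
  hence "coeff (\<Sum>j\<in>J. monom (c j) (e+j)) (e+j0) = 0" by simp
  moreover have "coeff (\<Sum>j\<in>J. monom (c j) (e+j)) (e+j0) = c j0"
    using assms(1,3) by (simp add: coeff_sum coeff_monom)
  ultimately show ?thesis by simp
qed


lemma homog_exists:
  fixes a :: "'i \<Rightarrow> 'v \<Rightarrow> 'f::field"
  assumes "finite E" "finite V" "card E < card V"
  shows "\<exists>x. (\<exists>v\<in>V. x v \<noteq> 0) \<and> (\<forall>i\<in>E. (\<Sum>v\<in>V. a i v * x v) = 0)"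
  using assms
proof (induction E arbitrary: V a rule: finite_induct)
  case empty
  then have "V \<noteq> {}" by auto
  then show ?case by (intro exI[of _ "\<lambda>_. 1"]) auto
next
  case (insert i E)
  show ?case
  proof (cases "\<forall>v\<in>V. a i v = 0")
    case True
    have "card E < card V" using insert by simp
    then obtain x where "\<exists>v\<in>V. x v \<noteq> 0" "\<forall>j\<in>E. (\<Sum>v\<in>V. a j v * x v) = 0"
      using insert.IH[OF insert.prems(1)] by blast
    then show ?thesis using True by (intro exI[of _ x]) auto
  next
    case False
    then obtain v0 where v0: "v0 \<in> V" "a i v0 \<noteq> 0" by auto
    define V' where "V' = V - {v0}"
    define a' where "a' j w = a j w - a j v0 / a i v0 * a i w" for j w
    have fV': "finite V'" using insert.prems V'_def by auto
    have "card E < card V'" using insert v0 unfolding V'_def by auto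
    then obtain x' where x': "\<exists>v\<in>V'. x' v \<noteq> 0" "\<forall>j\<in>E. (\<Sum>v\<in>V'. a' j v * x' v) = 0"
      using insert.IH[OF fV', of a'] by blast
    define s where "s j = (\<Sum>w\<in>V'. a j w * x' w)" for j
    define x where "x w = (if w = v0 then - s i / a i v0 else x' w)" for w
    have split: "(\<Sum>v\<in>V. a j v * x v) = a j v0 * x v0 + s j" for j
    proof -
      have "(\<Sum>v\<in>V. a j v * x v) = a j v0 * x v0 + (\<Sum>v\<in>V'. a j v * x v)"
        using insert.prems(1) v0 unfolding V'_def by (simp add: sum.remove)
      also have "(\<Sum>v\<in>V'. a j v * x v) = s j" unfolding s_def x_def V'_def
        by (intro sum.cong) auto
      finally show ?thesis .
    qed
    have "\<exists>v\<in>V. x v \<noteq> 0" using x'(1) unfolding x_def V'_def by auto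
    moreover have "(\<Sum>v\<in>V. a i v * x v) = 0" using split[of i] v0 by (simp add: x_def)
    moreover have "(\<Sum>v\<in>V. a j v * x v) = 0" if "j \<in> E" for j
    proof -
      have "0 = (\<Sum>v\<in>V'. a' j v * x' v)" using x'(2) that by simp
      also have "\<dots> = s j - a j v0 / a i v0 * s i"
        unfolding a'_def s_def by (simp add: algebra_simps sum_subtractf sum_distrib_left)
      finally have "s j = a j v0 / a i v0 * s i" by simp
      thus ?thesis using split[of j] v0 by (simp add: x_def field_simps)
    qed
    ultimately show ?thesis by blast
  qed
qed

lemma smult_sum_right: "smult a (\<Sum>i\<in>S. f i) = (\<Sum>i\<in>S. smult a (f i))"
  by (induct S rule: infinite_finite_induct) (auto simp: smult_add_right)


theorem mainTheorem4:
  fixes N :: nat and d :: int and dd rho :: "nat \<Rightarrow> int"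
  assumes N_pos: "N \<ge> 1"
    and d1_nonneg: "0 \<le> dd 1"
    and chain1: "\<And>i. 1 \<le> i \<Longrightarrow> i \<le> N \<Longrightarrow> dd i < rho (N + 1 - i)"
    and chain2: "\<And>i. 1 \<le> i \<Longrightarrow> i < N \<Longrightarrow> rho (N + 1 - i) \<le> dd (i + 1)"
    and rho1_le: "rho 1 \<le> d"
    and m_pos: "d - (\<Sum>l=1..N. rho l) + (\<Sum>l=1..N. dd l) > 0"
  shows "let m = d - (\<Sum>l=1..N. rho l) + (\<Sum>l=1..N. dd l);
             L = (\<Union>i\<in>{1..N}. {dd i + 1 .. rho (N + 1 - i) - 1});
             K = nat (d - m - int N)
         in \<exists>!C :: nat \<Rightarrow> complex. (\<forall>j. j \<notin> {1..K} \<longrightarrow> C j = 0) \<and>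
               (\<forall>l\<in>L. coeff (shifted_binom_poly (nat (m + int N)) K C) (nat l) = 0)"
proof -
  define M where "M = d - (\<Sum>l=1..N. rho l) + (\<Sum>l=1..N. dd l)"
  define I where "I i = {dd i + 1 .. rho (N + 1 - i) - 1}" for i
  define L where "L = (\<Union>i\<in>{1..N}. I i)"
  define K where "K = nat (d - M - int N)"
  define e where "e = nat (M + int N)"
  have dd_mono: "dd i \<le> dd j" if "1 \<le> i" "i \<le> j" "j \<le> N" for i j
    using that
  proof (induction j)
    case 0 then show ?case by simp
  next
    case (Suc j)
    show ?case
    proof (cases "i = Suc j")
      case True then show ?thesis by simp
    next
      case False
      then have "i \<le> j" "1 \<le> j" "j < N" using Suc.prems by auto
      then have "dd i \<le> dd j" using Suc.IH Suc.prems by auto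
      moreover have "dd j < rho (N + 1 - j)" "rho (N + 1 - j) \<le> dd (j + 1)"
        using chain1[of j] chain2[of j] \<open>1 \<le> j\<close> \<open>j < N\<close> by auto
      ultimately show ?thesis by simp
    qed
  qed
  have rho_le: "rho (N + 1 - i) \<le> d" if "1 \<le> i" "i \<le> N" for i
  proof (cases "i = N")
    case True then show ?thesis using rho1_le by simp
  next
    case False
    then have "rho (N + 1 - i) \<le> dd (i + 1)" using chain2 that by auto
    moreover have "dd (i + 1) \<le> dd N" using dd_mono[of "i+1" N] that False by auto
    moreover have "dd N < rho 1" using chain1[of N] N_pos by simp
    ultimately show ?thesis using rho1_le by simp
  qed
  have disj: "I i \<inter> I j = {}" if "i \<in> {1..N}" "j \<in> {1..N}" "i < j" for i j
  proof -
    have "rho (N + 1 - i) \<le> dd (i + 1)" using chain2 that by auto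
    moreover have "dd (i + 1) \<le> dd j" using dd_mono[of "i+1" j] that by auto
    ultimately show ?thesis unfolding I_def by auto
  qed
  have cardL: "int (card L) = (\<Sum>l=1..N. rho l) - (\<Sum>l=1..N. dd l) - int N"
  proof -
    have "card L = (\<Sum>i\<in>{1..N}. card (I i))"
      unfolding L_def
    proof (rule card_UN_disjoint)
      show "\<forall>i\<in>{1..N}. \<forall>j\<in>{1..N}. i \<noteq> j \<longrightarrow> I i \<inter> I j = {}"
      proof (intro ballI impI)
        fix i j assume ij: "i \<in> {1..N}" "j \<in> {1..N}" "i \<noteq> j"
        show "I i \<inter> I j = {}"
        proof (cases "i < j")
          case True then show ?thesis using disj ij by blast
        next
          case False then have "j < i" using ij by simp
          then show ?thesis using disj[of j i] ij by blast
        qed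
      qed
    qed (auto simp: I_def)
    hence "int (card L) = (\<Sum>i\<in>{1..N}. int (card (I i)))" by simp
    also have "\<dots> = (\<Sum>i\<in>{1..N}. rho (N + 1 - i) - dd i - 1)"
      using chain1 by (intro sum.cong refl) (auto simp: I_def)
    also have "\<dots> = (\<Sum>i\<in>{1..N}. rho (N + 1 - i)) - (\<Sum>l=1..N. dd l) - int N"
      by (simp add: sum_subtractf)
    also have "(\<Sum>i\<in>{1..N}. rho (N + 1 - i)) = (\<Sum>l=1..N. rho l)"
      using sum.atLeastAtMost_rev[of rho 1 N] by simp
    finally show ?thesis .
  qed
  have KL: "K = card L" and dK: "d = int e + int K"
    using cardL m_pos unfolding K_def e_def M_def by auto
  have Lrange: "0 \<le> l \<and> l \<le> d" if lL: "l \<in> L" for l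
  proof -
    obtain i where i: "i \<in> {1..N}" "l \<in> I i" using lL L_def by auto
    have "dd 1 \<le> dd i" using dd_mono[of 1 i] i by auto
    then show ?thesis using i rho_le[of i] d1_nonneg unfolding I_def by auto
  qed
  have finL: "finite L" unfolding L_def I_def by auto
  define Ln where "Ln = nat ` L"
  have cardLn: "card Ln = K" unfolding Ln_def KL
    by (rule card_image) (auto intro!: inj_onI dest!: Lrange)
  have Ln_sub: "Ln \<subseteq> {0..e+K}"
  proof
    fix n assume "n \<in> Ln"
    then obtain l where l: "l \<in> L" "n = nat l" unfolding Ln_def by blast
    then have "l \<le> int e + int K" using Lrange[of l] dK by simp
    then show "n \<in> {0..e+K}" using l by simp
  qed
  define G where "G c = (\<Sum>j=0..K. smult (c j) ([:1,1:]^(e+j)))" for c :: "nat \<Rightarrow> complex"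
  have coeffG: "coeff (G c) n = (\<Sum>j=0..K. c j * coeff ([:1,1:]^(e+j)) n)" for c n
    by (simp add: G_def coeff_sum)
  have Z: "\<forall>j\<le>K. c j = 0" if c0: "c 0 = 0" and cL: "\<forall>l\<in>L. coeff (G c) (nat l) = 0" for c
  proof -
    have dv: "[:1,1:]^(e+1) dvd G c" unfolding G_def
    proof (rule dvd_sum)
      fix j assume "j \<in> {0..K}"
      show "[:1,1:]^(e+1) dvd smult (c j) ([:1,1:]^(e+j))"
      proof (cases "j = 0")
        case True then show ?thesis using c0 by simp
      next
        case False
        then have "[:1,1:]^(e+1) dvd ([:1::complex,1:]^(e+j))" by (intro le_imp_power_dvd) auto
        then show ?thesis by (meson dvd_smult)
      qed
    qed
    have degG: "degree (G c) \<le> e + K" unfolding G_def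
    proof (rule degree_sum_le)
      fix j assume "j \<in> {0..K}"
      have "degree ([:1::complex,1:]^(e+j)) \<le> e + j"
        using degree_power_le[of "[:1::complex,1:]" "e+j"] by simp
      then show "degree (smult (c j) ([:1,1:]^(e+j))) \<le> e + K"
        using \<open>j \<in> {0..K}\<close> degree_smult_le[of "c j" "[:1,1:]^(e+j)"] by auto
    qed simp
    define T where "T = {0..e+K} - Ln"
    have "finite T" unfolding T_def by simp
    moreover have "\<forall>n. n \<notin> T \<longrightarrow> coeff (G c) n = 0"
    proof (intro allI impI)
      fix n assume "n \<notin> T"
      then consider "n > e + K" | "n \<in> Ln" unfolding T_def by force
      then show "coeff (G c) n = 0"
      proof cases
        case 1 then show ?thesis using degG by (intro coeff_eq_0) auto
      next
        case 2 then show ?thesis using cL unfolding Ln_def by auto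
      qed
    qed
    moreover have "card T \<le> e + 1" unfolding T_def
      using card_Diff_subset[of Ln "{0..e+K}"] Ln_sub cardLn finite_subset[OF Ln_sub] by simp
    ultimately have "G c = 0" using sparse_zero dv by blast
    then show ?thesis using indep[of "{0..K}" c e] unfolding G_def by auto
  qed
  have SG: "shifted_binom_poly e K C = G (\<lambda>j. if j = 0 then 1 else C j)" for C
    unfolding shifted_binom_poly_def G_def
    by (simp add: sum.atLeast_Suc_atMost[of 0 K] atLeastSucAtMost_greaterThanAtMost)
  have "\<exists>!C :: nat \<Rightarrow> complex. (\<forall>j. j \<notin> {1..K} \<longrightarrow> C j = 0) \<and>
               (\<forall>l\<in>L. coeff (shifted_binom_poly e K C) (nat l) = 0)"
  proof -
    obtain x :: "nat \<Rightarrow> complex" where x: "\<exists>v\<in>{0..K}. x v \<noteq> 0"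
      "\<forall>l\<in>L. (\<Sum>v\<in>{0..K}. coeff ([:1,1:]^(e+v)) (nat l) * x v) = 0"
      using homog_exists[of L "{0..K}" "\<lambda>l v. coeff ([:1::complex,1:]^(e+v)) (nat l)"] finL KL
      by auto
    have xG: "\<forall>l\<in>L. coeff (G x) (nat l) = 0" using x(2) by (simp add: coeffG mult.commute)
    have x0: "x 0 \<noteq> 0"
    proof
      assume "x 0 = 0"
      then have "\<forall>j\<le>K. x j = 0" using Z xG by blast
      then show False using x(1) by auto
    qed
    define C where "C j = (if j \<in> {1..K} then x j / x 0 else 0)" for j
    have "G (\<lambda>j. if j = 0 then 1 else C j) = smult (inverse (x 0)) (G x)"
      unfolding G_def smult_sum_right smult_smult
      by (intro sum.cong refl) (auto simp: C_def x0 field_simps)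
    then have ex: "(\<forall>j. j \<notin> {1..K} \<longrightarrow> C j = 0) \<and>
               (\<forall>l\<in>L. coeff (shifted_binom_poly e K C) (nat l) = 0)"
      using xG by (auto simp: SG C_def)
    have un: "C1 = C2" if h1: "(\<forall>j. j \<notin> {1..K} \<longrightarrow> C1 j = 0) \<and>
               (\<forall>l\<in>L. coeff (shifted_binom_poly e K C1) (nat l) = 0)"
      and h2: "(\<forall>j. j \<notin> {1..K} \<longrightarrow> C2 j = 0) \<and>
               (\<forall>l\<in>L. coeff (shifted_binom_poly e K C2) (nat l) = 0)" for C1 C2
    proof -
      define c where "c j = (if j = 0 then 0 else C1 j - C2 j)" for j
      have "coeff (G c) n = coeff (shifted_binom_poly e K C1) n - coeff (shifted_binom_poly e K C2) n" for n
        unfolding SG coeffG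
        by (simp add: sum.atLeast_Suc_atMost[of 0 K] c_def algebra_simps sum_subtractf)
      then have "\<forall>l\<in>L. coeff (G c) (nat l) = 0" using h1 h2 by simp
      then have "\<forall>j\<le>K. c j = 0" using Z[of c] by (simp add: c_def)
      show ?thesis
      proof
        fix j show "C1 j = C2 j"
        proof (cases "j \<in> {1..K}")
          case True
          then have "c j = 0" using \<open>\<forall>j\<le>K. c j = 0\<close> by simp
          then show ?thesis using True by (simp add: c_def)
        next
          case False then show ?thesis using h1 h2 by simp
        qed
      qed
    qed
    show ?thesis using ex un by blast
  qed
  then show ?thesis unfolding Let_def M_def[symmetric] L_def[symmetric, unfolded I_def]
    K_def[symmetric] e_def[symmetric] I_def .
qed

end
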